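(* For each positive integer $k$ there is $c_k>0$ such that the following holds. Suppose $P$ is a complete polynomial of degree $k$ with integer coefficients in its binomial representation. If $x$ is sufficiently large and $1<w<(\log x)/2$ is an integer, then the set $X$ of integers $y\in[x,(1+1/k)x)$ such that $P(y)$ has no prime divisor at most $w$ satisfies $|X|\ge c_k(\log w)^{-k}x$.
   Context: Every real polynomial of degree $k$ can be written as $P(x)=\sum_{i=0}^k\alpha_i\binom{x}{i}$; $P$ has integer coefficients in its binomial representation if all $\alpha_i$ are integers. $P$ is complete if every sufficiently large positive integer is a sum of distinct terms of $(P(m))_{m\ge1}$. $\log$ is the natural logarithm. *)

theory Defs
  imports Complex_Main "HOL-Computational_Algebra.Primes"
begin

definition binpoly :: "(nat \<Rightarrow> int) \<Rightarrow> nat \<Rightarrow> nat \<Rightarrow> int" where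
  "binpoly \<alpha> k m = (\<Sum>i\<le>k. \<alpha> i * int (m choose i))"

text \<open>Completeness: every sufficiently large positive integer is a sum of distinct
terms of the sequence (P(m))_{m>=1}, i.e. a sum over a finite set of indices m >= 1.\<close>
definition complete_seq :: "(nat \<Rightarrow> int) \<Rightarrow> bool" where
  "complete_seq f \<longleftrightarrow> (\<exists>N::int. \<forall>n\<ge>N. n > 0 \<longrightarrow>
      (\<exists>S. finite S \<and> S \<subseteq> {1..} \<and> n = (\<Sum>m\<in>S. f m)))"

end

theory Submission
  imports Defs "HOL-Number_Theory.Number_Theory" "HOL-Computational_Algebra.Polynomial"
begin

lemma prod_primes_dvd:
  fixes N :: nat
  assumes "finite S" "\<forall>p\<in>S. prime p \<and> p dvd N"
  shows "\<Prod>S dvd N"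
  using assms
proof (induction S rule: finite_induct)
  case empty then show ?case by simp
next
  case (insert p S)
  have "coprime p (\<Prod>S)"
    using insert by (intro prod_coprime_right) (metis insertCI primes_coprime)
  then show ?case using insert by (simp add: divides_mult)
qed

lemma central_binom_le: "(2*m+1 choose m) \<le> 4^m"
proof -
  have "(2*m+1 choose m) + (2*m+1 choose (m+1)) \<le> (\<Sum>i\<le>2*m+1. (2*m+1) choose i)"
  proof -
    have "(\<Sum>i\<in>{m, m+1}. (2*m+1) choose i) \<le> (\<Sum>i\<le>2*m+1. (2*m+1) choose i)"
      by (rule sum_mono2) auto
    then show ?thesis by simp
  qed
  also have "\<dots> = 2^(2*m+1)" by (rule choose_row_sum)
  finally have "2 * (2*m+1 choose m) \<le> 2 * 4^m"
    using binomial_symmetric[of m "2*m+1"] by (simp add: power_mult)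
  then show ?thesis by simp
qed

lemma prime_dvd_central: 
  assumes "prime p" "m + 1 < p" "p \<le> 2*m+1"
  shows "p dvd (2*m+1 choose m)"
proof -
  have "fact m * fact (2*m+1 - m) * (2*m+1 choose m) = (fact (2*m+1) :: nat)"
    by (rule binomial_fact_lemma) simp
  moreover have "p dvd (fact (2*m+1) :: nat)" using assms prime_dvd_fact_iff[of p "2*m+1"] by blast
  ultimately have "p dvd fact m * fact (m+1) * (2*m+1 choose m)" by (simp add: Suc_diff_le)
  moreover have "\<not> p dvd (fact m :: nat)" "\<not> p dvd (fact (m+1) :: nat)"
    using assms prime_dvd_fact_iff[of p m] prime_dvd_fact_iff[of p "m+1"] by auto
  ultimately show ?thesis using assms(1) by (simp add: prime_dvd_mult_iff)
qed

lemma primorial_le: "\<Prod>{p::nat. prime p \<and> p \<le> n} \<le> 4^n"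
proof (induction n rule: less_induct)
  case (less n)
  show ?case
  proof (cases "n \<le> 2")
    case True
    have "{p::nat. prime p \<and> p \<le> n} = (if n = 2 then {2} else {})"
      using True by (auto dest: prime_ge_2_nat)
    then show ?thesis by simp
  next
    case False
    show ?thesis
    proof (cases "even n")
      case True
      have "{p::nat. prime p \<and> p \<le> n} = {p. prime p \<and> p \<le> n - 1}"
      proof -
        have "\<not> prime n" using True False prime_odd_nat[of n] by auto
        then have "\<And>p. prime p \<and> p \<le> n \<longleftrightarrow> prime p \<and> p \<le> n - 1"
          using False by (metis One_nat_def Suc_pred le_SucE le_antisym not_less_eq_eq diff_le_self le_trans less_imp_le_nat zero_less_iff_neq_zero)
        then show ?thesis by blast
      qed
      also have "\<Prod>\<dots> \<le> 4^(n-1)" using less False by simp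
      also have "\<dots> \<le> 4^n" by simp
      finally show ?thesis .
    next
      case odd: False
      then obtain m where n: "n = 2*m+1" using oddE by blast
      have m1: "m \<ge> 1" using n False by simp
      have split: "{p::nat. prime p \<and> p \<le> n} = {p. prime p \<and> p \<le> m+1} \<union> {p. prime p \<and> m+1 < p \<and> p \<le> n}"
        using n by auto
      have fin1: "finite {p::nat. prime p \<and> p \<le> m+1}" by simp
      have fin2: "finite {p::nat. prime p \<and> m+1 < p \<and> p \<le> n}" by simp
      have "\<Prod>{p::nat. prime p \<and> p \<le> n} = \<Prod>{p. prime p \<and> p \<le> m+1} * \<Prod>{p. prime p \<and> m+1 < p \<and> p \<le> n}"
        unfolding split by (rule prod.union_disjoint[OF fin1 fin2]) auto
      also have "\<dots> \<le> 4^(m+1) * 4^m"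
      proof (rule mult_le_mono)
        show "\<Prod>{p. prime p \<and> p \<le> m+1} \<le> 4^(m+1)" using less.IH[of "m+1"] n m1 by simp
        have "\<Prod>{p. prime p \<and> m+1 < p \<and> p \<le> n} dvd (2*m+1 choose m)"
          using fin2 by (rule prod_primes_dvd) (use prime_dvd_central[of _ m] n in auto)
        then have "\<Prod>{p. prime p \<and> m+1 < p \<and> p \<le> n} \<le> (2*m+1 choose m)"
          by (rule dvd_imp_le) simp
        then show "\<Prod>{p. prime p \<and> m+1 < p \<and> p \<le> n} \<le> 4^m" using central_binom_le order_trans by blast
      qed
      also have "\<dots> = 4^n" by (simp add: n power_add[symmetric])
      finally show ?thesis .
    qed
  qed
qed

lemma prod_coprime_dvd:
  fixes N :: nat
  assumes "finite S" "\<forall>s\<in>S. f s dvd N" "\<forall>s\<in>S. \<forall>t\<in>S. s \<noteq> t \<longrightarrow> coprime (f s) (f t)"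
  shows "prod f S dvd N"
  using assms
proof (induction S rule: finite_induct)
  case empty then show ?case by simp
next
  case (insert p S)
  have "coprime (f p) (prod f S)"
    using insert by (intro prod_coprime_right) auto
  then show ?case using insert by (simp add: divides_mult)
qed

lemma primepow_dvd_fact:
  fixes p n :: nat
  assumes "p > 0"
  shows "p ^ (n div p) dvd fact n"
proof -
  define d where "d = n div p"
  have inj: "inj_on (\<lambda>j. j * p) {1..d}" using assms by (auto simp: inj_on_def)
  have sub: "(\<lambda>j. j * p) ` {1..d} \<subseteq> {1..n}"
  proof
    fix y assume "y \<in> (\<lambda>j. j * p) ` {1..d}"
    then obtain j where j: "j \<in> {1..d}" "y = j * p" by auto
    have "j * p \<le> d * p" using j by simp
    also have "\<dots> \<le> n" unfolding d_def by simp
    finally show "y \<in> {1..n}" using j assms by auto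
  qed
  have "\<Prod>((\<lambda>j. j * p) ` {1..d}) = (\<Prod>j\<in>{1..d}. j * p)"
    using prod.reindex[OF inj, of id] by simp
  also have "\<dots> = \<Prod>{1..d} * p ^ d"
    by (simp add: prod.distrib)
  finally have eq: "\<Prod>((\<lambda>j. j * p) ` {1..d}) = \<Prod>{1..d} * p ^ d" .
  have "\<Prod>((\<lambda>j. j * p) ` {1..d}) dvd \<Prod>{1..n}"
    by (rule prod_dvd_prod_subset[OF _ sub]) simp
  then have "p ^ d dvd \<Prod>{1..n}" unfolding eq using dvd_mult_right by blast
  then show ?thesis unfolding d_def fact_prod by simp
qed

lemma sum_div_ln_le:
  fixes n :: nat
  shows "(\<Sum>p\<in>{p. prime p \<and> p \<le> n}. real (n div p) * ln p) \<le> real n * ln n"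
proof -
  let ?P = "{p::nat. prime p \<and> p \<le> n}"
  have fin: "finite ?P" by simp
  have dvd: "(\<Prod>p\<in>?P. p ^ (n div p)) dvd fact n"
  proof (rule prod_coprime_dvd[OF fin])
    show "\<forall>s\<in>?P. s ^ (n div s) dvd fact n" using primepow_dvd_fact prime_gt_0_nat by blast
    show "\<forall>s\<in>?P. \<forall>t\<in>?P. s \<noteq> t \<longrightarrow> coprime (s ^ (n div s)) (t ^ (n div t))"
      by (auto intro: primes_coprime)
  qed
  then have le: "(\<Prod>p\<in>?P. p ^ (n div p)) \<le> (fact n :: nat)"
    by (rule dvd_imp_le) simp
  have "(\<Sum>p\<in>?P. real (n div p) * ln p) = ln (\<Prod>p\<in>?P. real p ^ (n div p))"
    by (subst ln_prod) (auto simp: ln_realpow prime_gt_0_nat)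
  also have "\<dots> \<le> ln (fact n)"
  proof (rule ln_mono)
    show "0 < (\<Prod>p\<in>?P. real p ^ (n div p))" by (rule prod_pos) (auto simp: prime_gt_0_nat)
    have "(\<Prod>p\<in>?P. real p ^ (n div p)) = real (\<Prod>p\<in>?P. p ^ (n div p))" by simp
    also have "\<dots> \<le> real (fact n)" using le by linarith
    finally show "(\<Prod>p\<in>?P. real p ^ (n div p)) \<le> fact n" by simp
  qed
  also have "\<dots> \<le> ln (real n ^ n)"
  proof (cases "n = 0")
    case False
    then show ?thesis by (intro ln_mono) (auto simp: fact_le_power[where 'a=real, simplified])
  qed simp
  also have "\<dots> = real n * ln n"
    by (cases "n = 0") (simp_all add: ln_realpow)
  finally show ?thesis .
qed

lemma theta_le: "(\<Sum>p\<in>{p::nat. prime p \<and> p \<le> n}. ln (real p)) \<le> real n * ln 4"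
proof -
  have "(\<Sum>p\<in>{p::nat. prime p \<and> p \<le> n}. ln (real p)) = ln (\<Prod>p\<in>{p::nat. prime p \<and> p \<le> n}. real p)"
    by (subst ln_prod) (auto simp: prime_gt_0_nat)
  also have "\<dots> \<le> ln (4 ^ n)"
  proof (rule ln_mono)
    show "0 < (\<Prod>p\<in>{p::nat. prime p \<and> p \<le> n}. real p)" by (rule prod_pos) (auto simp: prime_gt_0_nat)
    have "(\<Prod>p\<in>{p::nat. prime p \<and> p \<le> n}. real p) = real (\<Prod>{p::nat. prime p \<and> p \<le> n})" by simp
    also have "\<dots> \<le> real (4 ^ n)" using primorial_le[of n] by linarith
    finally show "(\<Prod>p\<in>{p::nat. prime p \<and> p \<le> n}. real p) \<le> 4 ^ n" by simp
  qed
  also have "\<dots> = real n * ln 4" by (simp add: ln_realpow)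
  finally show ?thesis .
qed

lemma sum_lnp_over_p:
  fixes n :: nat
  assumes "n \<ge> 1"
  shows "(\<Sum>p\<in>{p. prime p \<and> p \<le> n}. ln (real p) / real p) \<le> ln n + ln 4"
proof -
  let ?P = "{p::nat. prime p \<and> p \<le> n}"
  have low: "(real n / real p - 1) * ln p \<le> real (n div p) * ln p" if "p \<in> ?P" for p
  proof (rule mult_right_mono)
    have p0: "p > 0" using that prime_gt_0_nat by auto
    have d1: "p * (n div p) + n mod p = n" by (rule mult_div_mod_eq)
    have d2: "n mod p < p" using p0 by simp
    have "n < p * (n div p) + p" using d1 d2 by linarith
    also have "\<dots> = p * (n div p + 1)" by simp
    finally have h: "n < p * (n div p + 1)" .
    have "real n < real (p * (n div p + 1))" using h by (simp only: of_nat_less_iff)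
    then have "real n < real p * (real (n div p) + 1)" by (simp add: algebra_simps)
    then have "real n / real p < real (n div p) + 1" using p0 by (simp add: divide_less_eq mult.commute)
    then show "real n / real p - 1 \<le> real (n div p)" by simp
    show "0 \<le> ln (real p)" using p0 by simp
  qed
  have "(\<Sum>p\<in>?P. (real n / real p - 1) * ln p) \<le> real n * ln n"
  proof -
    have "(\<Sum>p\<in>?P. (real n / real p - 1) * ln p) \<le> (\<Sum>p\<in>?P. real (n div p) * ln p)"
      by (rule sum_mono) (rule low)
    then show ?thesis using sum_div_ln_le[of n] by linarith
  qed
  moreover have "(\<Sum>p\<in>?P. (real n / real p - 1) * ln p) = real n * (\<Sum>p\<in>?P. ln (real p) / real p) - (\<Sum>p\<in>?P. ln (real p))"
    by (simp add: sum_distrib_left sum_subtractf left_diff_distrib)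
  ultimately have "real n * (\<Sum>p\<in>?P. ln (real p) / real p) \<le> real n * ln n + real n * ln 4"
    using theta_le[of n] by linarith
  then have "real n * (\<Sum>p\<in>?P. ln (real p) / real p) \<le> real n * (ln n + ln 4)"
    by (simp add: algebra_simps)
  then show ?thesis using assms by (simp add: mult_le_cancel_left)
qed

definition mertB :: real where "mertB = 1 + ln 4 / ln 2 - ln (ln 2)"

lemma aux_alg1:
  fixes T S S' x y C :: real
  assumes "x \<noteq> 0"
  shows "T + (S' - S) / x + (x + C - S') / x = T + (y + C - S) / x + (x - y) / x"
proof -
  have "(S' - S) / x + (x + C - S') / x = ((S' - S) + (x + C - S')) / x" by (rule add_divide_distrib[symmetric])
  also have "(S' - S) + (x + C - S') = (y + C - S) + (x - y)" by simp
  also have "((y + C - S) + (x - y)) / x = (y + C - S) / x + (x - y) / x" by (rule add_divide_distrib)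
  finally show ?thesis by simp
qed

lemma aux_base:
  fixes l c m :: real
  assumes "l > 0"
  shows "1/2 + (l + c - l / 2) / l \<le> m + (1 + c / l - m)"
proof -
  have "(l + c - l / 2) / l = 1/2 + c / l" using assms by (simp add: field_simps)
  then show ?thesis by simp
qed

lemma lnln_step:
  fixes N :: nat
  assumes "N \<ge> 2"
  shows "(ln (Suc N) - ln N) / ln (Suc N) \<le> ln (ln (Suc N)) - ln (ln N)"
proof -
  have L: "ln N > 0" using assms by simp
  have L': "ln (Suc N) \<ge> ln N" using assms by simp
  have L'0: "ln (Suc N) > 0" using L L' by linarith
  have "ln (ln N / ln (Suc N)) \<le> ln N / ln (Suc N) - 1"
    using L L' assms by (intro ln_le_minus_one divide_pos_pos) auto
  moreover have "ln (ln N / ln (Suc N)) = ln (ln N) - ln (ln (Suc N))"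
    using L L' by (simp add: ln_div)
  moreover have "ln N / ln (Suc N) - 1 = - ((ln (Suc N) - ln N) / ln (Suc N))"
    using L'0 by (simp add: diff_divide_distrib)
  ultimately show ?thesis by linarith
qed

lemma mertens_inv:
  fixes N :: nat
  assumes "N \<ge> 2"
  shows "(\<Sum>p\<in>{p. prime p \<and> p \<le> N}. 1 / real p)
     + (ln N + ln 4 - (\<Sum>p\<in>{p. prime p \<and> p \<le> N}. ln (real p) / real p)) / ln N \<le> ln (ln N) + mertB"
  using assms
proof (induction N rule: nat_induct_at_least)
  case base
  have e: "{p::nat. prime p \<and> p \<le> 2} = {2}" by (auto dest: prime_ge_2_nat)
  have s1: "(\<Sum>p\<in>{2::nat}. 1 / real p) = 1/2" by simp
  have s2: "(\<Sum>p\<in>{2::nat}. ln (real p) / real p) = ln 2 / 2" by simp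
  show ?case unfolding e s1 s2 mertB_def using aux_base[of "ln 2" "ln 4" "ln (ln 2)"] by simp
next
  case (Suc N)
  define T where "T = (\<Sum>p\<in>{p. prime p \<and> p \<le> N}. 1 / real p)"
  define S where "S = (\<Sum>p\<in>{p. prime p \<and> p \<le> N}. ln (real p) / real p)"
  define T' where "T' = (\<Sum>p\<in>{p. prime p \<and> p \<le> Suc N}. 1 / real p)"
  define S' where "S' = (\<Sum>p\<in>{p. prime p \<and> p \<le> Suc N}. ln (real p) / real p)"
  have L: "ln N > 0" using Suc by simp
  have L': "ln (Suc N) \<ge> ln N" using Suc by simp
  have L'0: "ln (Suc N) > 0" using L L' by linarith
  have TS: "T' = T + (S' - S) / ln (Suc N)"
  proof (cases "prime (Suc N)")
    case True
    have e: "{p. prime p \<and> p \<le> Suc N} = insert (Suc N) {p. prime p \<and> p \<le> N}"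
      using True by (auto simp: le_Suc_eq)
    have nin: "Suc N \<notin> {p. prime p \<and> p \<le> N}" by simp
    have "T' = 1 / real (Suc N) + T"
      unfolding T'_def T_def e by (rule sum.insert[OF _ nin]) simp
    moreover have "S' = ln (Suc N) / real (Suc N) + S"
      unfolding S'_def S_def e by (rule sum.insert[OF _ nin]) simp
    ultimately show ?thesis using L'0 by simp
  next
    case False
    have e: "{p. prime p \<and> p \<le> Suc N} = {p. prime p \<and> p \<le> N}"
      using False by (auto simp: le_Suc_eq)
    have "T' = T" "S' = S"
      unfolding T'_def T_def S'_def S_def e by simp_all
    then show ?thesis by simp
  qed
  have nonneg: "0 \<le> ln N + ln 4 - S"
    using sum_lnp_over_p[of N] Suc unfolding S_def by simp
  have "T' + (ln (Suc N) + ln 4 - S') / ln (Suc N) = T + (ln N + ln 4 - S) / ln (Suc N) + (ln (Suc N) - ln N) / ln (Suc N)"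
    unfolding TS using L'0 aux_alg1 by (metis less_irrefl)
  also have "\<dots> \<le> T + (ln N + ln 4 - S) / ln N + (ln (ln (Suc N)) - ln (ln N))"
    using divide_left_mono[OF L' nonneg] L L'0 lnln_step[OF Suc(1)] mult_pos_pos[OF L'0 L] by linarith
  also have "\<dots> \<le> ln (ln (Suc N)) + mertB"
    using Suc(2) unfolding T_def S_def by simp
  finally show ?case unfolding T'_def S'_def .
qed

lemma mertens:
  fixes N :: nat
  assumes "N \<ge> 2"
  shows "(\<Sum>p\<in>{p. prime p \<and> p \<le> N}. 1 / real p) \<le> ln (ln N) + mertB"
proof -
  have "0 \<le> (ln N + ln 4 - (\<Sum>p\<in>{p. prime p \<and> p \<le> N}. ln (real p) / real p)) / ln N"
    using sum_lnp_over_p[of N] assms by simp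
  then show ?thesis using mertens_inv[OF assms] by linarith
qed

lemma coeffs_dvd_mult:
  fixes g h :: "int poly"
  assumes "\<forall>i. d dvd coeff g i"
  shows "d dvd coeff (h * g) n"
  unfolding coeff_mult by (rule dvd_sum) (use assms in auto)

lemma roots_bound:
  fixes f :: "int poly" and p :: nat
  assumes "prime p" "\<exists>i. \<not> int p dvd coeff f i"
  shows "card {r. r < p \<and> int p dvd poly f (int r)} \<le> degree f"
  using assms(2)
proof (induction "degree f" arbitrary: f rule: less_induct)
  case less
  let ?R = "{r. r < p \<and> int p dvd poly f (int r)}"
  have finR: "finite ?R" by simp
  show ?case
  proof (cases "?R = {}")
    case True then show ?thesis by (metis card.empty le0)
  next
    case False
    then obtain a where a: "a < p" "int p dvd poly f (int a)" by auto
    define g where "g = synthetic_div f (int a)"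
    have feq: "f = [:- int a, 1:] * g + [:poly f (int a):]"
      unfolding g_def by (rule synthetic_div_correct'[symmetric])
    have coeff_f: "coeff f i = coeff ([:- int a, 1:] * g) i + (if i = 0 then poly f (int a) else 0)" for i
      by (subst feq) (simp add: coeff_pCons split: nat.split)
    have deg_pos: "degree f > 0"
    proof (rule ccontr)
      assume "\<not> degree f > 0"
      then have "degree f = 0" by simp
      then have "\<forall>i. int p dvd coeff f i"
      proof (intro allI)
        fix i
        show "int p dvd coeff f i"
        proof (cases "i = 0")
          case True
          have "poly f (int a) = coeff f 0" using \<open>degree f = 0\<close> by (simp add: poly_altdef)
          then show ?thesis using a True by simp
        next
          case False
          then have "coeff f i = 0" using \<open>degree f = 0\<close> by (simp add: coeff_eq_0)
          then show ?thesis by simp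
        qed
      qed
      then show False using less.prems by blast
    qed
    have degg: "degree g < degree f" unfolding g_def using deg_pos by (simp add: degree_synthetic_div)
    have gnd: "\<exists>i. \<not> int p dvd coeff g i"
    proof (rule ccontr)
      assume "\<not> (\<exists>i. \<not> int p dvd coeff g i)"
      then have "\<forall>i. int p dvd coeff g i" by blast
      then have "int p dvd coeff f i" for i
        using coeffs_dvd_mult[of "int p" g "[:- int a, 1:]" i] a(2) unfolding coeff_f by auto
      then show False using less.prems by blast
    qed
    have IH: "card {r. r < p \<and> int p dvd poly g (int r)} \<le> degree g"
      using less.hyps[OF degg gnd] .
    have sub: "?R \<subseteq> insert a {r. r < p \<and> int p dvd poly g (int r)}"
    proof
      fix r assume r: "r \<in> ?R"
      have pf: "poly f (int r) = (int r - int a) * poly g (int r) + poly f (int a)"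
        by (subst feq) (simp add: algebra_simps)
      have "int p dvd (int r - int a) * poly g (int r)"
        using r a(2) pf by (metis (no_types, lifting) dvd_diff add_diff_cancel_right' mem_Collect_eq)
      moreover have pp: "prime (int p)" using assms(1) by simp
      ultimately have "int p dvd (int r - int a) \<or> int p dvd poly g (int r)"
        by (simp add: prime_dvd_mult_iff)
      then show "r \<in> insert a {r. r < p \<and> int p dvd poly g (int r)}"
      proof
        assume "int p dvd (int r - int a)"
        then have "[int r = int a] (mod int p)" by (simp add: cong_iff_dvd_diff)
        then have "[r = a] (mod p)" by (simp add: cong_int_iff)
        then have "r = a" using cong_less_modulus_unique_nat r a(1) by auto
        then show ?thesis by simp
      qed (use r in auto)
    qed
    have "card ?R \<le> card (insert a {r. r < p \<and> int p dvd poly g (int r)})"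
      by (rule card_mono[OF _ sub]) simp
    also have "\<dots> \<le> Suc (card {r. r < p \<and> int p dvd poly g (int r)})"
      by (simp add: card_insert_if)
    also have "\<dots> \<le> degree f" using IH degg by simp
    finally show ?thesis .
  qed
qed

definition Qpoly :: "(nat \<Rightarrow> int) \<Rightarrow> nat \<Rightarrow> int poly" where
  "Qpoly \<alpha> k = (\<Sum>i\<le>k. smult (\<alpha> i * (fact k div fact i)) (\<Prod>j<i. [:- int j, 1:]))"

lemma falling_int: "(\<Prod>j<i. (int m - int j)) = fact i * int (m choose i)"
proof -
  have "real_of_int (\<Prod>j<i. (int m - int j)) = (\<Prod>j<i. (real m - real j))" by simp
  also have "\<dots> = (\<Prod>j=0..<i. (real m - real j))" by (simp add: lessThan_atLeast0)
  also have "\<dots> = fact i * (real m gchoose i)" by (rule gbinomial_mult_fact[symmetric])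
  also have "\<dots> = fact i * real (m choose i)" by (simp add: binomial_gbinomial)
  also have "\<dots> = real_of_int (fact i * int (m choose i))" by simp
  finally show ?thesis by (simp only: of_int_eq_iff)
qed

lemma Qpoly_eval:
  "poly (Qpoly \<alpha> k) (int m) = fact k * (\<Sum>i\<le>k. \<alpha> i * int (m choose i))"
proof -
  have "poly (Qpoly \<alpha> k) (int m) = (\<Sum>i\<le>k. \<alpha> i * (fact k div fact i) * (\<Prod>j<i. (int m - int j)))"
    unfolding Qpoly_def by (simp add: poly_sum poly_prod)
  also have "\<dots> = (\<Sum>i\<le>k. fact k * (\<alpha> i * int (m choose i)))"
  proof (rule sum.cong)
    fix i assume "i \<in> {..k}"
    then have "(fact i :: int) dvd fact k" by (simp add: fact_dvd)
    then have "(fact k div fact i) * fact i = (fact k :: int)" by simp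
    then show "\<alpha> i * (fact k div fact i) * (\<Prod>j<i. (int m - int j)) = fact k * (\<alpha> i * int (m choose i))"
      unfolding falling_int by (metis mult.assoc mult.commute)
  qed simp
  also have "\<dots> = fact k * (\<Sum>i\<le>k. \<alpha> i * int (m choose i))" by (simp add: sum_distrib_left)
  finally show ?thesis .
qed

lemma Qpoly_degree: "degree (Qpoly \<alpha> k) \<le> k"
  unfolding Qpoly_def
proof (rule degree_sum_le)
  fix i assume i: "i \<in> {..k}"
  have "degree (\<Prod>j<i. [:- int j, 1:]) \<le> (\<Sum>j<i. degree [:- int j, 1:])"
    using degree_prod_sum_le[of "{..<i}" "\<lambda>j. [:- int j, 1:]"] by (simp add: o_def)
  also have "\<dots> = i" by simp
  finally show "degree (smult (\<alpha> i * (fact k div fact i)) (\<Prod>j<i. [:- int j, 1:])) \<le> k"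
    using i by (meson atMost_iff degree_smult_le le_trans)
qed simp

lemma bij_from_inj_card:
  assumes "inj_on f X" "f ` X \<subseteq> Y" "finite Y" "card X = card Y"
  shows "bij_betw f X Y"
proof -
  have "card (f ` X) = card Y" using assms by (simp add: card_image)
  then have "f ` X = Y" using card_subset_eq[OF assms(3) assms(2)] by simp
  then show ?thesis using assms(1) by (simp add: bij_betw_def)
qed

lemma card_filter_bij:
  assumes "bij_betw f X Y" "\<And>y. y \<in> X \<Longrightarrow> A y = B (f y)"
  shows "card {y\<in>X. A y} = card {r\<in>Y. B r}"
proof -
  have "f ` {y\<in>X. A y} = {r\<in>Y. B r}"
    using assms by (auto simp: bij_betw_def)
  moreover have "inj_on f {y\<in>X. A y}" using assms(1) by (auto simp: bij_betw_def intro: inj_on_subset)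
  ultimately show ?thesis by (metis card_image)
qed

lemma crt2:
  fixes M N :: nat
  assumes "M > 0" "N > 0" "coprime M N"
    and A: "\<And>y. A y = A (y mod M)" and B: "\<And>y. B y = B (y mod N)"
  shows "card {y. y < M * N \<and> A y \<and> B y} = card {a. a < M \<and> A a} * card {b. b < N \<and> B b}"
proof -
  define f where "f y = (y mod M, y mod N)" for y
  have inj: "inj_on f {..<M*N}"
  proof (rule inj_onI)
    fix x y assume x: "x \<in> {..<M*N}" and y: "y \<in> {..<M*N}" and e: "f x = f y"
    then have "[x = y] (mod M)" "[x = y] (mod N)" by (simp_all add: f_def cong_def)
    then have "[x = y] (mod M * N)" using assms(3) by (rule coprime_cong_mult_nat)
    then show "x = y" using cong_less_modulus_unique_nat x y by auto
  qed
  have bij: "bij_betw f {..<M*N} ({..<M} \<times> {..<N})"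
    by (rule bij_from_inj_card[OF inj]) (auto simp: f_def assms card_cartesian_product)
  have "card {y\<in>{..<M*N}. A y \<and> B y} = card {r\<in>{..<M} \<times> {..<N}. A (fst r) \<and> B (snd r)}"
    by (rule card_filter_bij[OF bij]) (simp add: f_def A[symmetric] B[symmetric])
  also have "{r\<in>{..<M} \<times> {..<N}. A (fst r) \<and> B (snd r)} = {a. a < M \<and> A a} \<times> {b. b < N \<and> B b}"
    by auto
  also have "card \<dots> = card {a. a < M \<and> A a} * card {b. b < N \<and> B b}"
    by (rule card_cartesian_product)
  finally show ?thesis by simp
qed

lemma crt_count:
  fixes S :: "nat set" and q :: "nat \<Rightarrow> nat" and G :: "nat \<Rightarrow> nat \<Rightarrow> bool"
  assumes "finite S" "\<forall>p\<in>S. q p > 0"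
    "\<forall>p\<in>S. \<forall>p'\<in>S. p \<noteq> p' \<longrightarrow> coprime (q p) (q p')"
    "\<forall>p\<in>S. \<forall>y. G p y = G p (y mod q p)"
  shows "card {y. y < prod q S \<and> (\<forall>p\<in>S. G p y)} = (\<Prod>p\<in>S. card {r. r < q p \<and> G p r})"
  using assms
proof (induction S rule: finite_induct)
  case empty then show ?case by simp
next
  case (insert p S)
  note fin = insert(1) and pnot = insert(2)
  note pos = insert.prems(1) and copr = insert.prems(2) and per = insert.prems(3)
  have IH: "card {y. y < prod q S \<and> (\<forall>p\<in>S. G p y)} = (\<Prod>p\<in>S. card {r. r < q p \<and> G p r})"
    by (rule insert.IH) (use pos copr per in \<open>simp_all only: ball_simps insert_iff\<close>; blast)+
  have N0: "prod q S > 0" using pos by (simp add: prod_pos)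
  have cop1: "coprime (q p) (q s)" if "s \<in> S" for s
  proof -
    have ne: "p \<noteq> s" using that pnot by auto
    have "p \<in> insert p S" "s \<in> insert p S" using that by auto
    then show ?thesis using copr ne by meson
  qed
  have cop: "coprime (q p) (prod q S)"
    by (rule prod_coprime_right) (rule cop1)
  have Aper: "G p y = G p (y mod q p)" for y using per by blast
  have Bper: "(\<forall>s\<in>S. G s y) = (\<forall>s\<in>S. G s (y mod prod q S))" for y
  proof -
    have "G s y = G s (y mod prod q S)" if "s \<in> S" for s
    proof -
      have d: "q s dvd prod q S" using that fin by (simp add: dvd_prodI)
      have "G s y = G s (y mod q s)" using per that by blast
      also have "y mod q s = (y mod prod q S) mod q s" using d by (simp add: mod_mod_cancel)
      also have "G s \<dots> = G s (y mod prod q S)" using per that by blast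
      finally show ?thesis .
    qed
    then show ?thesis by blast
  qed
  have "{y. y < prod q (insert p S) \<and> (\<forall>s\<in>insert p S. G s y)}
      = {y. y < q p * prod q S \<and> G p y \<and> (\<forall>s\<in>S. G s y)}"
    using fin pnot by simp
  then have "card {y. y < prod q (insert p S) \<and> (\<forall>s\<in>insert p S. G s y)}
      = card {y. y < q p * prod q S \<and> G p y \<and> (\<forall>s\<in>S. G s y)}" by simp
  also have "\<dots> = card {a. a < q p \<and> G p a} * card {b. b < prod q S \<and> (\<forall>s\<in>S. G s b)}"
    by (rule crt2[where M="q p" and N="prod q S" and A="G p" and B="\<lambda>y. \<forall>s\<in>S. G s y", OF _ N0 cop Aper Bper]) (use pos in simp)
  also have "\<dots> = card {a. a < q p \<and> G p a} * (\<Prod>s\<in>S. card {r. r < q s \<and> G s r})"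
    using IH by simp
  also have "\<dots> = (\<Prod>s\<in>insert p S. card {r. r < q s \<and> G s r})"
    using fin pnot by simp
  finally show ?case .
qed

lemma block_one:
  fixes T b :: nat
  assumes "T > 0" "\<And>y. A y = A (y mod T)"
  shows "card {y. b \<le> y \<and> y < b + T \<and> A y} = card {r. r < T \<and> A r}"
proof -
  have inj: "inj_on (\<lambda>y. y mod T) {b..<b+T}"
  proof (rule inj_onI)
    fix x y assume x: "x \<in> {b..<b+T}" and y: "y \<in> {b..<b+T}" and e: "x mod T = y mod T"
    have "[x - b = y - b] (mod T)" using x y e by (metis atLeastLessThan_iff cong_def cong_diff_nat cong_refl)
    then have "x - b = y - b" using cong_less_modulus_unique_nat x y by auto
    then show "x = y" using x y by auto
  qed
  have bij: "bij_betw (\<lambda>y. y mod T) {b..<b+T} {..<T}"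
    by (rule bij_from_inj_card[OF inj]) (auto simp: assms)
  have "card {y\<in>{b..<b+T}. A y} = card {r\<in>{..<T}. A r}"
    by (rule card_filter_bij[OF bij]) (use assms in auto)
  moreover have "{y\<in>{b..<b+T}. A y} = {y. b \<le> y \<and> y < b + T \<and> A y}" by auto
  moreover have "{r\<in>{..<T}. A r} = {r. r < T \<and> A r}" by auto
  ultimately show ?thesis by simp
qed

lemma block_count:
  fixes T a m :: nat
  assumes "T > 0" "\<And>y. A y = A (y mod T)"
  shows "card {y. a \<le> y \<and> y < a + m * T \<and> A y} = m * card {r. r < T \<and> A r}"
proof (induction m)
  case 0 then show ?case by simp
next
  case (Suc m)
  have "{y. a \<le> y \<and> y < a + Suc m * T \<and> A y} =
        {y. a \<le> y \<and> y < a + m * T \<and> A y} \<union> {y. a + m * T \<le> y \<and> y < (a + m * T) + T \<and> A y}"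
    by auto
  moreover have "card (\<dots>) = card {y. a \<le> y \<and> y < a + m * T \<and> A y} + card {y. a + m * T \<le> y \<and> y < (a + m * T) + T \<and> A y}"
    by (rule card_Un_disjoint) auto
  moreover have "card {y. a + m * T \<le> y \<and> y < (a + m * T) + T \<and> A y} = card {r. r < T \<and> A r}"
    by (rule block_one[where T=T and A=A and b="a + m * T"]) (use assms in auto)
  ultimately show ?case using Suc by simp
qed

definition qq :: "nat \<Rightarrow> nat \<Rightarrow> nat" where
  "qq k p = p ^ Suc (multiplicity p (fact k :: nat))"

lemma qq_pos: "prime p \<Longrightarrow> qq k p > 0"
  unfolding qq_def by (simp add: prime_gt_0_nat)

lemma binom_L_dvd:
  fixes p k L j :: nat
  assumes p: "prime p" and L: "qq k p dvd L" and j: "1 \<le> j" "j \<le> k"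
  shows "p dvd (L choose j)"
proof (rule ccontr)
  assume nd: "\<not> p dvd (L choose j)"
  obtain j' where j': "j = Suc j'" using j by (cases j) auto
  have "j * (L choose j) = L * ((L - 1) choose j')"
    unfolding j' by (rule binomial_absorption)
  then have "qq k p dvd j * (L choose j)" using L by simp
  moreover have "coprime (qq k p) (L choose j)"
    unfolding qq_def using prime_imp_coprime[OF p nd] by simp
  ultimately have "qq k p dvd j" by (simp add: coprime_dvd_mult_left_iff)
  moreover have "j dvd fact k" using j by (rule dvd_fact)
  ultimately have "p ^ Suc (multiplicity p (fact k :: nat)) dvd (fact k :: nat)"
    unfolding qq_def by (rule dvd_trans)
  moreover have "(fact k :: nat) \<noteq> 0" by simp
  moreover have "\<not> is_unit p" using prime_gt_1_nat[OF p] by simp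
  ultimately have "Suc (multiplicity p (fact k :: nat)) \<le> multiplicity p (fact k :: nat)"
    using power_dvd_iff_le_multiplicity by blast
  then show False by simp
qed

lemma binom_shift:
  fixes p k L i y :: nat
  assumes p: "prime p" and L: "qq k p dvd L" and i: "i \<le> k"
  shows "int p dvd int ((y + L) choose i) - int (y choose i)"
proof -
  have "(L + y) choose i = (\<Sum>j\<le>i. (L choose j) * (y choose (i - j)))"
    by (rule vandermonde[symmetric])
  also have "{..i} = insert 0 {1..i}" by auto
  also have "(\<Sum>j\<in>insert 0 {1..i}. (L choose j) * (y choose (i - j)))
      = (y choose i) + (\<Sum>j\<in>{1..i}. (L choose j) * (y choose (i - j)))"
    by (subst sum.insert) auto
  finally have e: "(y + L) choose i = (y choose i) + (\<Sum>j\<in>{1..i}. (L choose j) * (y choose (i - j)))"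
    by (simp add: add.commute)
  have "p dvd (\<Sum>j\<in>{1..i}. (L choose j) * (y choose (i - j)))"
    by (rule dvd_sum) (use binom_L_dvd[OF p L] i in auto)
  then have "int p dvd int (\<Sum>j\<in>{1..i}. (L choose j) * (y choose (i - j)))"
    by (simp only: int_dvd_int_iff)
  then show ?thesis unfolding e by simp
qed

lemma binpoly_shift:
  assumes p: "prime p" and L: "qq k p dvd L"
  shows "int p dvd binpoly \<alpha> k (y + L) - binpoly \<alpha> k y"
proof -
  have "binpoly \<alpha> k (y + L) - binpoly \<alpha> k y = (\<Sum>i\<le>k. \<alpha> i * (int ((y + L) choose i) - int (y choose i)))"
    unfolding binpoly_def by (simp add: sum_subtractf right_diff_distrib)
  also have "int p dvd \<dots>"
    by (rule dvd_sum) (use binom_shift[OF p L] in auto)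
  finally show ?thesis .
qed

lemma binpoly_mod:
  assumes p: "prime p"
  shows "(int p dvd binpoly \<alpha> k y) = (int p dvd binpoly \<alpha> k (y mod qq k p))"
proof -
  define r where "r = y mod qq k p"
  define L where "L = qq k p * (y div qq k p)"
  have y: "y = r + L" unfolding r_def L_def by simp
  have "qq k p dvd L" unfolding L_def by simp
  then have d: "int p dvd binpoly \<alpha> k (r + L) - binpoly \<alpha> k r" by (rule binpoly_shift[OF p])
  have "binpoly \<alpha> k (r + L) = (binpoly \<alpha> k (r + L) - binpoly \<alpha> k r) + binpoly \<alpha> k r" by simp
  then have "(int p dvd binpoly \<alpha> k (r + L)) = (int p dvd binpoly \<alpha> k r)"
    using d by (metis dvd_add_right_iff)
  then show ?thesis unfolding r_def[symmetric] using y by simp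
qed

lemma complete_nondiv:
  assumes c: "complete_seq f" and p: "prime p"
  shows "\<exists>m\<ge>1. \<not> int p dvd f m"
proof (rule ccontr)
  assume "\<not> (\<exists>m\<ge>1. \<not> int p dvd f m)"
  then have all: "\<forall>m\<ge>1. int p dvd f m" by blast
  obtain N :: int where N: "\<forall>n\<ge>N. n > 0 \<longrightarrow> (\<exists>S. finite S \<and> S \<subseteq> {1..} \<and> n = (\<Sum>m\<in>S. f m))"
    using c unfolding complete_seq_def by blast
  define n where "n = int p * (\<bar>N\<bar> + 1) + 1"
  have p2: "int p \<ge> 2" using prime_ge_2_nat[OF p] by simp
  have "int p * (\<bar>N\<bar> + 1) \<ge> 2 * (\<bar>N\<bar> + 1)" using p2 by (intro mult_right_mono) auto
  then have nN: "n \<ge> N" "n > 0" unfolding n_def by auto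
  then obtain S where S: "finite S" "S \<subseteq> {1..}" "n = (\<Sum>m\<in>S. f m)" using N by blast
  have "int p dvd (\<Sum>m\<in>S. f m)"
    by (rule dvd_sum) (use S all in auto)
  then have "int p dvd n" using S by simp
  moreover have "int p dvd int p * (\<bar>N\<bar> + 1)" by simp
  ultimately have "int p dvd 1" unfolding n_def using dvd_add_right_iff by blast
  then show False using p2 by simp
qed

lemma Gp_pos:
  assumes p: "prime p" and c: "complete_seq (binpoly \<alpha> k)"
  shows "card {r. r < qq k p \<and> \<not> int p dvd binpoly \<alpha> k r} \<ge> 1"
proof -
  obtain m where m: "\<not> int p dvd binpoly \<alpha> k m" using complete_nondiv[OF c p] by blast
  have "m mod qq k p \<in> {r. r < qq k p \<and> \<not> int p dvd binpoly \<alpha> k r}"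
    using m qq_pos[OF p] binpoly_mod[OF p, of \<alpha> k m] by simp
  moreover have "finite {r. r < qq k p \<and> \<not> int p dvd binpoly \<alpha> k r}" by simp
  ultimately show ?thesis by (metis One_nat_def Suc_leI card_gt_0_iff empty_iff)
qed

lemma qq_large:
  assumes p: "prime p" and pk: "k < p"
  shows "qq k p = p"
proof -
  have "\<not> p dvd (fact k :: nat)" using prime_dvd_fact_iff[OF p, of k] pk by simp
  moreover have "(fact k :: nat) \<noteq> 0" by simp
  moreover have "\<not> is_unit p" using prime_gt_1_nat[OF p] by simp
  ultimately have "multiplicity p (fact k :: nat) = 0" using multiplicity_eq_zero_iff by blast
  then show ?thesis unfolding qq_def by simp
qed

lemma Gp_large:
  assumes p: "prime p" and pk: "k < p" and c: "complete_seq (binpoly \<alpha> k)"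
  shows "card {r. r < p \<and> \<not> int p dvd binpoly \<alpha> k r} \<ge> p - k"
proof -
  have pp: "prime (int p)" using p by simp
  have nf: "\<not> int p dvd fact k"
  proof
    assume "int p dvd fact k"
    then have "int p dvd int (fact k)" by simp
    then have "p dvd fact k" by (simp only: int_dvd_int_iff)
    then show False using prime_dvd_fact_iff[OF p, of k] pk by simp
  qed
  have iff: "(int p dvd poly (Qpoly \<alpha> k) (int r)) = (int p dvd binpoly \<alpha> k r)" for r
    unfolding Qpoly_eval binpoly_def[symmetric] using nf pp by (simp add: prime_dvd_mult_iff)
  have coef: "\<exists>i. \<not> int p dvd coeff (Qpoly \<alpha> k) i"
  proof (rule ccontr)
    assume "\<not> (\<exists>i. \<not> int p dvd coeff (Qpoly \<alpha> k) i)"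
    then have all: "\<forall>i. int p dvd coeff (Qpoly \<alpha> k) i" by blast
    have "int p dvd poly (Qpoly \<alpha> k) (int m)" for m
      unfolding poly_altdef by (rule dvd_sum) (use all in auto)
    then have "int p dvd binpoly \<alpha> k m" for m using iff by blast
    then show False using complete_nondiv[OF c p] by blast
  qed
  have R: "card {r. r < p \<and> int p dvd binpoly \<alpha> k r} \<le> k"
  proof -
    have "card {r. r < p \<and> int p dvd binpoly \<alpha> k r} = card {r. r < p \<and> int p dvd poly (Qpoly \<alpha> k) (int r)}"
      using iff by simp
    also have "\<dots> \<le> degree (Qpoly \<alpha> k)" by (rule roots_bound[OF p coef])
    also have "\<dots> \<le> k" by (rule Qpoly_degree)
    finally show ?thesis .
  qed
  have "{r. r < p \<and> \<not> int p dvd binpoly \<alpha> k r} = {..<p} - {r. r < p \<and> int p dvd binpoly \<alpha> k r}"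
    by auto
  moreover have fin: "finite {r. r < p \<and> int p dvd binpoly \<alpha> k r}" by simp
  moreover have sub: "{r. r < p \<and> int p dvd binpoly \<alpha> k r} \<subseteq> {..<p}" by auto
  ultimately have "card {r. r < p \<and> \<not> int p dvd binpoly \<alpha> k r} = p - card {r. r < p \<and> int p dvd binpoly \<alpha> k r}"
    using card_Diff_subset[OF fin sub] by simp
  then show ?thesis using R by simp
qed

lemma telescope_inv: "N \<ge> 1 \<Longrightarrow> (\<Sum>n\<in>{2..N}. 1 / (real n * (real n - 1))) = 1 - 1 / real N"
proof (induction N rule: nat_induct_at_least)
  case base then show ?case by simp
next
  case (Suc N)
  have e: "{2..Suc N} = insert (Suc N) {2..N}" using Suc by auto
  have "(\<Sum>n\<in>{2..Suc N}. 1 / (real n * (real n - 1))) = 1 / (real (Suc N) * (real (Suc N) - 1)) + (1 - 1 / real N)"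
    unfolding e using Suc by (subst sum.insert) auto
  also have "\<dots> = 1 - 1 / real (Suc N)"
  proof -
    have N0: "real N > 0" using Suc(1) by simp
    have h: "real N + real N * real N \<noteq> 0" using N0 by (metis add_pos_pos mult_pos_pos less_irrefl)
    show ?thesis using N0 h by (simp add: field_simps)
  qed
  finally show ?case .
qed

lemma sum_inv_sq: "(\<Sum>p\<in>{p. prime p \<and> p \<le> w}. 1 / (real p)^2) \<le> 1"
proof (cases "w \<ge> 1")
  case False
  then have "{p. prime p \<and> p \<le> w} = {}" by (auto dest: prime_gt_0_nat)
  then show ?thesis by (simp only: sum.empty)
next
  case True
  have "(\<Sum>p\<in>{p. prime p \<and> p \<le> w}. 1 / (real p)^2) \<le> (\<Sum>p\<in>{p. prime p \<and> p \<le> w}. 1 / (real p * (real p - 1)))"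
  proof (rule sum_mono)
    fix p assume "p \<in> {p. prime p \<and> p \<le> w}"
    then have p2: "real p \<ge> 2" using prime_ge_2_nat by auto
    have "real p * (real p - 1) \<le> (real p)^2" by (simp add: power2_eq_square algebra_simps)
    moreover have "0 < real p * (real p - 1)" using p2 by simp
    ultimately show "1 / (real p)^2 \<le> 1 / (real p * (real p - 1))" using p2 by (intro divide_left_mono) (auto intro!: mult_pos_pos)
  qed
  also have "\<dots> \<le> (\<Sum>n\<in>{2..w}. 1 / (real n * (real n - 1)))"
  proof (rule sum_mono2)
    show "{p. prime p \<and> p \<le> w} \<subseteq> {2..w}" using prime_ge_2_nat by auto
    fix n assume "n \<in> {2..w} - {p. prime p \<and> p \<le> w}"
    then have "real n \<ge> 2" by auto
    then show "0 \<le> 1 / (real n * (real n - 1))" by simp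
  qed simp
  also have "\<dots> = 1 - 1 / real w" using True by (rule telescope_inv)
  also have "\<dots> \<le> 1" by simp
  finally show ?thesis .
qed

definition Tw :: "nat \<Rightarrow> nat \<Rightarrow> nat" where
  "Tw k w = (\<Prod>p\<in>{p. prime p \<and> p \<le> w}. qq k p)"

definition Ak :: "nat \<Rightarrow> nat" where
  "Ak k = (\<Prod>p\<in>{p. prime p \<and> p \<le> 2 * k}. qq k p)"

definition goodP :: "(nat \<Rightarrow> int) \<Rightarrow> nat \<Rightarrow> nat \<Rightarrow> nat \<Rightarrow> bool" where
  "goodP \<alpha> k w y = (\<forall>p. prime p \<and> p \<le> w \<longrightarrow> \<not> int p dvd binpoly \<alpha> k y)"

lemma Tw_pos: "Tw k w > 0" unfolding Tw_def by (rule prod_pos) (auto simp: qq_pos)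
lemma Ak_pos: "Ak k > 0" unfolding Ak_def by (rule prod_pos) (auto simp: qq_pos)

lemma qq_dvd_Tw: "prime p \<Longrightarrow> p \<le> w \<Longrightarrow> qq k p dvd Tw k w"
  unfolding Tw_def by (rule dvd_prodI) auto

lemma goodP_mod: "goodP \<alpha> k w y = goodP \<alpha> k w (y mod Tw k w)"
proof -
  have "(int p dvd binpoly \<alpha> k y) = (int p dvd binpoly \<alpha> k (y mod Tw k w))" if "prime p" "p \<le> w" for p
  proof -
    have "(int p dvd binpoly \<alpha> k y) = (int p dvd binpoly \<alpha> k (y mod qq k p))" by (rule binpoly_mod[OF that(1)])
    also have "y mod qq k p = (y mod Tw k w) mod qq k p" using qq_dvd_Tw[OF that] by (simp add: mod_mod_cancel)
    also have "(int p dvd binpoly \<alpha> k \<dots>) = (int p dvd binpoly \<alpha> k (y mod Tw k w))" by (rule binpoly_mod[OF that(1), symmetric])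
    finally show ?thesis .
  qed
  then show ?thesis unfolding goodP_def by blast
qed

lemma count_Tw:
  "card {y. y < Tw k w \<and> goodP \<alpha> k w y} = (\<Prod>p\<in>{p. prime p \<and> p \<le> w}. card {r. r < qq k p \<and> \<not> int p dvd binpoly \<alpha> k r})"
proof -
  have "card {y. y < prod (qq k) {p. prime p \<and> p \<le> w} \<and> (\<forall>p\<in>{p. prime p \<and> p \<le> w}. \<not> int p dvd binpoly \<alpha> k y)}
      = (\<Prod>p\<in>{p. prime p \<and> p \<le> w}. card {r. r < qq k p \<and> \<not> int p dvd binpoly \<alpha> k r})"
  proof (rule crt_count)
    show "\<forall>p\<in>{p. prime p \<and> p \<le> w}. 0 < qq k p" by (auto simp: qq_pos)
    show "\<forall>p\<in>{p. prime p \<and> p \<le> w}. \<forall>p'\<in>{p. prime p \<and> p \<le> w}. p \<noteq> p' \<longrightarrow> coprime (qq k p) (qq k p')"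
      unfolding qq_def by (auto intro: primes_coprime)
    show "\<forall>p\<in>{p. prime p \<and> p \<le> w}. \<forall>y. (\<not> int p dvd binpoly \<alpha> k y) = (\<not> int p dvd binpoly \<alpha> k (y mod qq k p))"
      using binpoly_mod by blast
  qed simp
  moreover have "{y. y < prod (qq k) {p. prime p \<and> p \<le> w} \<and> (\<forall>p\<in>{p. prime p \<and> p \<le> w}. \<not> int p dvd binpoly \<alpha> k y)}
      = {y. y < Tw k w \<and> goodP \<alpha> k w y}"
    unfolding Tw_def goodP_def by auto
  ultimately show ?thesis by simp
qed

lemma density:
  fixes k w :: nat
  assumes k1: "k \<ge> 1" and c: "complete_seq (binpoly \<alpha> k)" and w2: "w \<ge> 2"
  shows "exp (- real k * mertB - 2 * (real k)^2) / real (Ak k) * (ln (real w)) powr (- real k)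
     \<le> real (card {y. y < Tw k w \<and> goodP \<alpha> k w y}) / real (Tw k w)"
proof -
  define S where "S = {p. prime p \<and> p \<le> w}"
  define S1 where "S1 = {p\<in>S. p \<le> 2 * k}"
  define S2 where "S2 = {p\<in>S. 2 * k < p}"
  define g where "g p = card {r. r < qq k p \<and> \<not> int p dvd binpoly \<alpha> k r}" for p
  define E where "E = exp (- real k * mertB - 2 * (real k)^2)"
  have finS: "finite S" unfolding S_def by simp
  have finS1: "finite S1" "finite S2" unfolding S1_def S2_def using finS by auto
  have Sun: "S = S1 \<union> S2" unfolding S1_def S2_def by auto
  have Sdis: "S1 \<inter> S2 = {}" unfolding S1_def S2_def by auto
  have lnw: "ln (real w) > 0" using w2 by simp
  have ratio: "real (card {y. y < Tw k w \<and> goodP \<alpha> k w y}) / real (Tw k w) = (\<Prod>p\<in>S. real (g p) / real (qq k p))"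
  proof -
    have "card {y. y < Tw k w \<and> goodP \<alpha> k w y} = (\<Prod>p\<in>S. g p)" unfolding count_Tw S_def g_def ..
    moreover have "Tw k w = (\<Prod>p\<in>S. qq k p)" unfolding Tw_def S_def ..
    ultimately show ?thesis by (simp add: prod_dividef)
  qed
  also have "\<dots> = (\<Prod>p\<in>S1. real (g p) / real (qq k p)) * (\<Prod>p\<in>S2. real (g p) / real (qq k p))"
    unfolding Sun by (rule prod.union_disjoint[OF finS1 Sdis])
  finally have ratio2: "real (card {y. y < Tw k w \<and> goodP \<alpha> k w y}) / real (Tw k w)
      = (\<Prod>p\<in>S1. real (g p) / real (qq k p)) * (\<Prod>p\<in>S2. real (g p) / real (qq k p))" .
  have R1: "1 / real (Ak k) \<le> (\<Prod>p\<in>S1. real (g p) / real (qq k p))"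
  proof -
    have "(\<Prod>p\<in>S1. qq k p) dvd Ak k"
      unfolding Ak_def by (rule prod_dvd_prod_subset) (auto simp: S1_def S_def)
    then have "(\<Prod>p\<in>S1. qq k p) \<le> Ak k" using Ak_pos by (intro dvd_imp_le) auto
    then have le: "real (\<Prod>p\<in>S1. qq k p) \<le> real (Ak k)" by linarith
    have "(\<Prod>p\<in>S1. qq k p) > 0" by (rule prod_pos) (auto simp: qq_pos S1_def S_def)
    then have pos: "real (\<Prod>p\<in>S1. qq k p) > 0" by (simp only: of_nat_0_less_iff)
    have "1 / real (Ak k) \<le> 1 / real (\<Prod>p\<in>S1. qq k p)"
      using le pos by (intro divide_left_mono) auto
    also have "\<dots> = (\<Prod>p\<in>S1. 1 / real (qq k p))" by (simp add: prod_dividef)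
    also have "\<dots> \<le> (\<Prod>p\<in>S1. real (g p) / real (qq k p))"
    proof (rule prod_mono)
      fix p assume "p \<in> S1"
      then have p: "prime p" unfolding S1_def S_def by auto
      have "g p \<ge> 1" unfolding g_def by (rule Gp_pos[OF p c])
      then show "0 \<le> 1 / real (qq k p) \<and> 1 / real (qq k p) \<le> real (g p) / real (qq k p)"
        using qq_pos[OF p] by (auto intro: divide_right_mono)
    qed
    finally show ?thesis .
  qed
  have R1pos: "0 \<le> 1 / real (Ak k)" by simp
  have R2a: "(\<Prod>p\<in>S2. 1 - real k / real p) \<le> (\<Prod>p\<in>S2. real (g p) / real (qq k p))"
  proof (rule prod_mono)
    fix p assume "p \<in> S2"
    then have p: "prime p" and pk: "2 * k < p" unfolding S2_def S_def by auto
    have kp: "k < p" using pk by simp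
    have qqp: "qq k p = p" by (rule qq_large[OF p kp])
    have gp: "g p \<ge> p - k" unfolding g_def qqp by (rule Gp_large[OF p kp c])
    have p0: "real p > 0" using kp by simp
    have "1 - real k / real p = real (p - k) / real p" using kp p0 by (simp add: field_simps of_nat_diff)
    also have "\<dots> \<le> real (g p) / real p" using gp p0 by (intro divide_right_mono) auto
    finally show "0 \<le> 1 - real k / real p \<and> 1 - real k / real p \<le> real (g p) / real (qq k p)"
      using kp p0 qqp by (simp add: field_simps)
  qed
  have R2b: "exp (- real k * (\<Sum>p\<in>S. 1 / real p) - 2 * (real k)^2) \<le> (\<Prod>p\<in>S2. 1 - real k / real p)"
  proof -
    have pos: "1 - real k / real p > 0" if "p \<in> S2" for p
    proof -
      have "2 * k < p" using that unfolding S2_def by auto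
      then have "real k / real p < 1" by (simp add: field_simps)
      then show ?thesis by simp
    qed
    have eq: "(\<Prod>p\<in>S2. 1 - real k / real p) = exp (\<Sum>p\<in>S2. ln (1 - real k / real p))"
      using pos by (simp add: exp_sum[OF finS1(2)])
    have lb: "(\<Sum>p\<in>S2. (- (real k / real p) - 2 * (real k / real p)^2)) \<le> (\<Sum>p\<in>S2. ln (1 - real k / real p))"
    proof (rule sum_mono)
      fix p assume "p \<in> S2"
      then have pk: "2 * k < p" unfolding S2_def by auto
      then have "real k / real p \<le> 1/2" by (simp add: field_simps)
      then show "- (real k / real p) - 2 * (real k / real p)^2 \<le> ln (1 - real k / real p)"
        by (intro ln_one_minus_pos_lower_bound) auto
    qed
    have s1: "(\<Sum>p\<in>S2. 1 / real p) \<le> (\<Sum>p\<in>S. 1 / real p)"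
      by (rule sum_mono2[OF finS]) (auto simp: Sun)
    have s2: "(\<Sum>p\<in>S2. 1 / (real p)^2) \<le> 1"
    proof -
      have "(\<Sum>p\<in>S2. 1 / (real p)^2) \<le> (\<Sum>p\<in>S. 1 / (real p)^2)"
        by (rule sum_mono2[OF finS]) (auto simp: Sun)
      also have "\<dots> \<le> 1" unfolding S_def by (rule sum_inv_sq)
      finally show ?thesis .
    qed
    have "(\<Sum>p\<in>S2. (- (real k / real p) - 2 * (real k / real p)^2))
        = - real k * (\<Sum>p\<in>S2. 1 / real p) - 2 * (real k)^2 * (\<Sum>p\<in>S2. 1 / (real p)^2)"
      by (simp add: sum_subtractf sum_distrib_left power_divide sum_negf)
    also have "\<dots> \<ge> - real k * (\<Sum>p\<in>S. 1 / real p) - 2 * (real k)^2"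
    proof -
      have "real k * (\<Sum>p\<in>S2. 1 / real p) \<le> real k * (\<Sum>p\<in>S. 1 / real p)"
        using s1 by (intro mult_left_mono) auto
      moreover have "2 * (real k)^2 * (\<Sum>p\<in>S2. 1 / (real p)^2) \<le> 2 * (real k)^2"
        using s2 by (simp add: mult_left_le)
      ultimately show ?thesis by linarith
    qed
    finally have "- real k * (\<Sum>p\<in>S. 1 / real p) - 2 * (real k)^2 \<le> (\<Sum>p\<in>S2. ln (1 - real k / real p))"
      using lb by linarith
    then show ?thesis unfolding eq by simp
  qed
  have R2c: "E * (ln (real w)) powr (- real k) \<le> exp (- real k * (\<Sum>p\<in>S. 1 / real p) - 2 * (real k)^2)"
  proof -
    have m: "(\<Sum>p\<in>S. 1 / real p) \<le> ln (ln (real w)) + mertB" unfolding S_def by (rule mertens[OF w2])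
    have "E * (ln (real w)) powr (- real k) = exp (- real k * (ln (ln (real w)) + mertB) - 2 * (real k)^2)"
      unfolding E_def powr_def using lnw by (simp add: exp_add[symmetric] algebra_simps)
    also have "\<dots> \<le> exp (- real k * (\<Sum>p\<in>S. 1 / real p) - 2 * (real k)^2)"
      using m by (simp add: mult_left_mono)
    finally show ?thesis .
  qed
  have "E / real (Ak k) * (ln (real w)) powr (- real k) = (1 / real (Ak k)) * (E * (ln (real w)) powr (- real k))"
    by simp
  also have "\<dots> \<le> (\<Prod>p\<in>S1. real (g p) / real (qq k p)) * (\<Prod>p\<in>S2. real (g p) / real (qq k p))"
  proof (rule mult_mono[OF R1])
    show "E * ln (real w) powr - real k \<le> (\<Prod>p\<in>S2. real (g p) / real (qq k p))"
      using R2a R2b R2c by linarith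
    show "0 \<le> (\<Prod>p\<in>S1. real (g p) / real (qq k p))" using R1 R1pos by linarith
    show "0 \<le> E * ln (real w) powr - real k" unfolding E_def by simp
  qed
  finally show ?thesis unfolding ratio2 E_def .
qed

lemma ev_bound:
  fixes A :: real and k :: nat
  assumes A: "A > 0" and k: "k \<ge> 1"
  shows "\<exists>x0. \<forall>x\<ge>x0. 1 \<le> x \<and> 1 + A * x powr ln 2 \<le> x / (2 * real k)"
proof -
  have lim: "((\<lambda>x::real. x powr (ln 2 - 1)) \<longlongrightarrow> 0) at_top"
    by (rule tendsto_neg_powr) (use ln_2_less_1 in \<open>simp_all add: filterlim_ident\<close>)
  have kpos: "real k > 0" using k by simp
  have "0 < 1 / (4 * real k * A)" using A kpos by simp
  then have ev1: "eventually (\<lambda>x::real. x powr (ln 2 - 1) < 1 / (4 * real k * A)) at_top"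
    using order_tendstoD(2)[OF lim] by blast
  have ev2: "eventually (\<lambda>x::real. x \<ge> max 1 (4 * real k)) at_top" by (rule eventually_ge_at_top)
  have "eventually (\<lambda>x::real. 1 \<le> x \<and> 1 + A * x powr ln 2 \<le> x / (2 * real k)) at_top"
    using ev1 ev2
  proof eventually_elim
    case (elim x)
    have x1: "x \<ge> 1" and x4: "x \<ge> 4 * real k" using elim by auto
    have xp: "x > 0" using x1 by simp
    have "x powr ln 2 = x powr (1 + (ln 2 - 1))" by simp
    also have "\<dots> = x powr 1 * x powr (ln 2 - 1)" by (rule powr_add)
    also have "\<dots> = x * x powr (ln 2 - 1)" using xp by simp
    finally have e: "x powr ln 2 = x * x powr (ln 2 - 1)" .
    have "A * x powr ln 2 = (A * x) * x powr (ln 2 - 1)" using e by simp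
    also have "\<dots> \<le> (A * x) * (1 / (4 * real k * A))"
      using elim A xp by (intro mult_left_mono) auto
    also have "\<dots> = x / (4 * real k)" using A by simp
    finally have t1: "A * x powr ln 2 \<le> x / (4 * real k)" .
    have t2: "1 \<le> x / (4 * real k)" using x4 kpos by (simp add: field_simps)
    have "x / (4 * real k) + x / (4 * real k) = x / (2 * real k)" by (simp add: field_simps)
    then show ?case using t1 t2 x1 by linarith
  qed
  then show ?thesis unfolding eventually_at_top_linorder by blast
qed

lemma Tw_bound:
  fixes k w :: nat
  shows "Tw k w \<le> Ak k * 4 ^ w"
proof -
  define S where "S = {p. prime p \<and> p \<le> w}"
  define S1 where "S1 = {p\<in>S. p \<le> 2 * k}"
  define S2 where "S2 = {p\<in>S. 2 * k < p}"
  have finS: "finite S" unfolding S_def by simp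
  have finS1: "finite S1" "finite S2" unfolding S1_def S2_def using finS by auto
  have Sun: "S = S1 \<union> S2" unfolding S1_def S2_def by auto
  have Sdis: "S1 \<inter> S2 = {}" unfolding S1_def S2_def by auto
  have "Tw k w = (\<Prod>p\<in>S1. qq k p) * (\<Prod>p\<in>S2. qq k p)"
    unfolding Tw_def S_def[symmetric] Sun by (rule prod.union_disjoint[OF finS1 Sdis])
  also have "(\<Prod>p\<in>S2. qq k p) = (\<Prod>p\<in>S2. p)"
    by (rule prod.cong) (auto simp: S2_def S_def intro: qq_large)
  also have "(\<Prod>p\<in>S1. qq k p) * (\<Prod>p\<in>S2. p) \<le> Ak k * 4 ^ w"
  proof (rule mult_le_mono)
    have "(\<Prod>p\<in>S1. qq k p) dvd Ak k"
      unfolding Ak_def by (rule prod_dvd_prod_subset) (auto simp: S1_def S_def)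
    then show "(\<Prod>p\<in>S1. qq k p) \<le> Ak k" using Ak_pos by (intro dvd_imp_le) auto
    have "(\<Prod>p\<in>S2. p) dvd \<Prod>S"
      by (rule prod_dvd_prod_subset[OF finS]) (auto simp: Sun)
    then have "(\<Prod>p\<in>S2. p) \<le> \<Prod>S" by (rule dvd_imp_le) (auto simp: S_def prime_gt_0_nat intro!: prod_pos)
    also have "\<dots> \<le> 4 ^ w" unfolding S_def by (rule primorial_le)
    finally show "(\<Prod>p\<in>S2. p) \<le> 4 ^ w" .
  qed
  finally show ?thesis .
qed

lemma aux_c: "(e / a / d) * P * (x::real) = x / d * (e / a * P)"
  by (simp add: divide_inverse ac_simps)

lemma aux_T: "(t::real) > 0 \<Longrightarrow> (X - t) * (g / t) = (X / t - 1) * g"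
  by (simp add: field_simps)

theorem lemma3p3:
  fixes k :: nat
  assumes "k \<ge> 1"
  shows "\<exists>c>0. \<forall>\<alpha> :: nat \<Rightarrow> int.
           \<alpha> k \<noteq> 0 \<and> complete_seq (binpoly \<alpha> k) \<longrightarrow>
           (\<exists>x0::real. \<forall>x\<ge>x0. \<forall>w::nat. 1 < w \<and> real w < ln x / 2 \<longrightarrow>
              real (card {y::nat. x \<le> real y \<and> real y < (1 + 1 / real k) * x \<and>
                   (\<forall>p::nat. prime p \<and> p \<le> w \<longrightarrow> \<not> int p dvd binpoly \<alpha> k y)})
              \<ge> c * (ln (real w)) powr (- real k) * x)"
proof -
  define A where "A = real (Ak k)"
  define E where "E = exp (- real k * mertB - 2 * (real k)^2)"
  define c where "c = E / A / (2 * real k)"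
  have kpos: "real k > 0" using assms by simp
  have Apos: "A > 0" unfolding A_def using Ak_pos by simp
  have Epos: "E > 0" unfolding E_def by simp
  have cpos: "c > 0" unfolding c_def using Apos Epos kpos by simp
  obtain x0 where x0: "\<forall>x\<ge>x0. 1 \<le> x \<and> 1 + A * x powr ln 2 \<le> x / (2 * real k)"
    using ev_bound[OF Apos assms] by blast
  show ?thesis
  proof (rule exI[of _ c], intro conjI allI impI)
    show "c > 0" by (rule cpos)
    fix \<alpha> :: "nat \<Rightarrow> int"
    assume "\<alpha> k \<noteq> 0 \<and> complete_seq (binpoly \<alpha> k)"
    then have compl: "complete_seq (binpoly \<alpha> k)" by blast
    show "\<exists>x0::real. \<forall>x\<ge>x0. \<forall>w::nat. 1 < w \<and> real w < ln x / 2 \<longrightarrow>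
              real (card {y::nat. x \<le> real y \<and> real y < (1 + 1 / real k) * x \<and>
                   (\<forall>p::nat. prime p \<and> p \<le> w \<longrightarrow> \<not> int p dvd binpoly \<alpha> k y)})
              \<ge> c * (ln (real w)) powr (- real k) * x"
    proof (rule exI[of _ x0], intro allI impI)
      fix x :: real and w :: nat
      assume xx0: "x0 \<le> x" and ww: "1 < w \<and> real w < ln x / 2"
      have x1: "1 \<le> x" and xb: "1 + A * x powr ln 2 \<le> x / (2 * real k)" using x0 xx0 by auto
      have xp: "x > 0" using x1 by simp
      have w2: "w \<ge> 2" using ww by simp
      define T where "T = Tw k w"
      define G where "G = card {y. y < T \<and> goodP \<alpha> k w y}"
      have Tpos: "T > 0" unfolding T_def by (rule Tw_pos)
      have Tle: "real T \<le> A * x powr ln 2"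
      proof -
        have "real T \<le> A * 4 ^ w" unfolding T_def A_def
          using Tw_bound[of k w] by (metis of_nat_le_iff of_nat_mult of_nat_numeral of_nat_power)
        also have "(4::real) ^ w \<le> x powr ln 2"
        proof -
          have "(4::real) ^ w = exp (real w * ln 4)" by (simp add: exp_of_nat_mult)
          also have "\<dots> \<le> exp ((ln x / 2) * ln 4)"
            using ww by (intro exp_le_cancel_iff[THEN iffD2] mult_right_mono) auto
          also have "(ln x / 2) * ln 4 = ln 2 * ln x"
          proof -
            have "ln (4::real) = 2 * ln 2" using ln_realpow[of 2 2] by simp
            then show ?thesis by simp
          qed
          also have "exp (ln 2 * ln x) = x powr ln 2" using xp by (simp add: powr_def)
          finally show ?thesis .
        qed
        then have "A * 4 ^ w \<le> A * x powr ln 2" using Apos by simp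
        finally show ?thesis .
      qed
      have dens: "E / A * (ln (real w)) powr (- real k) \<le> real G / real T"
        unfolding E_def A_def G_def T_def by (rule density[OF assms compl w2])
      define a where "a = nat \<lceil>x\<rceil>"
      define m where "m = nat \<lfloor>(x / real k - 1) / real T\<rfloor>"
      have gap: "x / real k - 1 - real T \<ge> x / (2 * real k)"
      proof -
        have "x / real k = x / (2 * real k) + x / (2 * real k)" by (simp add: field_simps)
        then show ?thesis using xb Tle by linarith
      qed
      have q0: "(x / real k - 1) / real T \<ge> 0"
      proof -
        have "x / (2 * real k) \<ge> 0" using xp kpos by simp
        then have "x / real k - 1 \<ge> 0" using gap by linarith
        then show ?thesis using Tpos by simp
      qed
      have mreal: "real m \<ge> (x / real k - 1) / real T - 1" and mreal2: "real m * real T \<le> x / real k - 1"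
      proof -
        have "real m = of_int \<lfloor>(x / real k - 1) / real T\<rfloor>" unfolding m_def using q0 by simp
        then show "real m \<ge> (x / real k - 1) / real T - 1" by linarith
        have "real m \<le> (x / real k - 1) / real T" using \<open>real m = _\<close> by linarith
        then show "real m * real T \<le> x / real k - 1" using Tpos by (simp add: field_simps)
      qed
      have ax: "x \<le> real a" "real a < x + 1" unfolding a_def using xp by linarith+
      let ?X = "{y::nat. x \<le> real y \<and> real y < (1 + 1 / real k) * x \<and>
                   (\<forall>p::nat. prime p \<and> p \<le> w \<longrightarrow> \<not> int p dvd binpoly \<alpha> k y)}"
      have sub: "{y. a \<le> y \<and> y < a + m * T \<and> goodP \<alpha> k w y} \<subseteq> ?X"
      proof
        fix y assume y: "y \<in> {y. a \<le> y \<and> y < a + m * T \<and> goodP \<alpha> k w y}"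
        have "x \<le> real y" using y ax by auto
        moreover have "real y < (1 + 1 / real k) * x"
        proof -
          have "real y < real a + real m * real T" using y by (metis mem_Collect_eq of_nat_add of_nat_less_iff of_nat_mult)
          also have "\<dots> < x + 1 + (x / real k - 1)" using ax mreal2 by linarith
          also have "\<dots> = (1 + 1 / real k) * x" by (simp add: field_simps)
          finally show ?thesis .
        qed
        ultimately show "y \<in> ?X" using y unfolding goodP_def by auto
      qed
      have finX: "finite ?X"
      proof (rule finite_subset)
        show "?X \<subseteq> {..nat \<lceil>(1 + 1 / real k) * x\<rceil>}"
        proof
          fix y assume "y \<in> ?X"
          then have "real y < (1 + 1 / real k) * x" by simp
          then show "y \<in> {..nat \<lceil>(1 + 1 / real k) * x\<rceil>}" by (simp add: le_nat_iff) linarith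
        qed
      qed simp
      have "card {y. a \<le> y \<and> y < a + m * T \<and> goodP \<alpha> k w y} = m * G"
        unfolding G_def by (rule block_count[OF Tpos]) (simp add: T_def goodP_mod[symmetric])
      moreover have "card {y. a \<le> y \<and> y < a + m * T \<and> goodP \<alpha> k w y} \<le> card ?X"
        by (rule card_mono[OF finX sub])
      ultimately have "m * G \<le> card ?X" by simp
      then have "real (m * G) \<le> real (card ?X)" by (simp only: of_nat_le_iff)
      then have cnt: "real m * real G \<le> real (card ?X)" by simp
      have "c * (ln (real w)) powr (- real k) * x = x / (2 * real k) * (E / A * (ln (real w)) powr (- real k))"
        unfolding c_def by (rule aux_c)
      also have "\<dots> \<le> x / (2 * real k) * (real G / real T)"
        using dens xp kpos by (intro mult_left_mono) auto
      also have "\<dots> \<le> (x / real k - 1 - real T) * (real G / real T)"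
        using gap by (intro mult_right_mono) auto
      also have "\<dots> = ((x / real k - 1) / real T - 1) * real G"
        using Tpos by (intro aux_T) simp
      also have "\<dots> \<le> real m * real G"
        using mreal by (intro mult_right_mono) auto
      also have "\<dots> \<le> real (card ?X)" by (rule cnt)
      finally show "c * (ln (real w)) powr (- real k) * x \<le> real (card ?X)" .
    qed
  qed
qed

end
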